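(* Let $\mathcal{H}_{A_1},\mathcal{H}_{A_2}$ be finite-dimensional Hilbert spaces with fixed reference bases (and the product basis on $\mathcal{H}_{A_1}\otimes\mathcal{H}_{A_2}$). For all states $\rho_1$ on $\mathcal{H}_{A_1}$ and $\rho_2$ on $\mathcal{H}_{A_2}$, $$C_{\max}(\rho_1\otimes\rho_2)=C_{\max}(\rho_1)+C_{\max}(\rho_2).$$
   Context: $D_{\max}(\rho\|\sigma)=\min\{\lambda\ge0:\rho\leq2^\lambda\sigma\}$. $\mathcal{I}$ is the set of incoherent states (states diagonal in the reference basis), and the max-relative entropy of coherence is $C_{\max}(\rho)=\min_{\sigma\in\mathcal{I}}D_{\max}(\rho\|\sigma)$. *)

theory Defs
  imports "HOL-Analysis.Analysis" "HOL-Library.Complex_Order"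
begin

text \<open>Operators on a finite-dimensional Hilbert space whose fixed reference (orthonormal)
basis is indexed by the finite type 'a are represented by their matrices in that basis.\<close>
type_synonym 'a cmat = "'a \<Rightarrow> 'a \<Rightarrow> complex"

definition psd :: "('a::finite) cmat \<Rightarrow> bool" where
  "psd A \<longleftrightarrow> (\<forall>v :: 'a \<Rightarrow> complex. 0 \<le> (\<Sum>i\<in>UNIV. \<Sum>j\<in>UNIV. cnj (v i) * A i j * v j))"

definition loewner_le :: "('a::finite) cmat \<Rightarrow> 'a cmat \<Rightarrow> bool" where
  "loewner_le A B \<longleftrightarrow> psd (\<lambda>i j. B i j - A i j)"

definition mtrace :: "('a::finite) cmat \<Rightarrow> complex" where
  "mtrace A = (\<Sum>i\<in>UNIV. A i i)"

definition density :: "('a::finite) cmat \<Rightarrow> bool" where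
  "density \<rho> \<longleftrightarrow> psd \<rho> \<and> mtrace \<rho> = 1"

definition incoherent :: "('a::finite) cmat \<Rightarrow> bool" where
  "incoherent \<sigma> \<longleftrightarrow> density \<sigma> \<and> (\<forall>i j. i \<noteq> j \<longrightarrow> \<sigma> i j = 0)"

definition tensor :: "('a::finite) cmat \<Rightarrow> ('b::finite) cmat \<Rightarrow> ('a \<times> 'b) cmat" where
  "tensor A B = (\<lambda>(i, k) (j, l). A i j * B k l)"

text \<open>Max-relative entropy; the minimum over an empty set is +\<infinity>.\<close>
definition Dmax :: "('a::finite) cmat \<Rightarrow> 'a cmat \<Rightarrow> ereal" where
  "Dmax \<rho> \<sigma> = Inf (ereal ` {l::real. l \<ge> 0 \<and>
       loewner_le \<rho> (\<lambda>i j. complex_of_real (2 powr l) * \<sigma> i j)})"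

definition Cmax :: "('a::finite) cmat \<Rightarrow> ereal" where
  "Cmax \<rho> = (INF \<sigma> \<in> {\<sigma>. incoherent \<sigma>}. Dmax \<rho> \<sigma>)"

end

theory Submission
  imports Defs
begin


definition form :: "('a::finite) cmat \<Rightarrow> ('a \<Rightarrow> complex) \<Rightarrow> complex" where
  "form A v = (\<Sum>i\<in>UNIV. \<Sum>j\<in>UNIV. cnj (v i) * A i j * v j)"

definition ev :: "'a \<Rightarrow> 'a \<Rightarrow> complex" where "ev k x = (if x = k then 1 else 0)"

lemma psd_form: "psd A \<longleftrightarrow> (\<forall>v. 0 \<le> form A v)"
  by (simp add: psd_def form_def)

lemma sum_ev_r: "(\<Sum>j\<in>UNIV. g j * ev i j) = g (i::'a::finite)"
proof -
  have "(\<Sum>j\<in>UNIV. g j * ev i j) = (\<Sum>j\<in>UNIV. if j = i then g i else 0)"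
    by (rule sum.cong) (auto simp: ev_def)
  then show ?thesis by simp
qed
lemma sum_ev_l: "(\<Sum>j\<in>UNIV. ev i j * g j) = g (i::'a::finite)"
  using sum_ev_r[of g i] by (simp add: mult.commute)

lemma sum_lin2: "(\<Sum>j\<in>UNIV. f j * (\<alpha> * ev i j + \<beta> * ev k j)) = \<alpha> * f i + \<beta> * f (k::'a::finite)"
proof -
  have "(\<Sum>j\<in>UNIV. f j * (\<alpha> * ev i j + \<beta> * ev k j)) = (\<Sum>j\<in>UNIV. (\<alpha> * f j) * ev i j) + (\<Sum>j\<in>UNIV. (\<beta> * f j) * ev k j)"
    by (simp add: sum.distrib algebra_simps)
  then show ?thesis by (simp add: sum_ev_r)
qed

lemma form2: "form A (\<lambda>x. \<alpha> * ev i x + \<beta> * ev j x) =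
   cnj \<alpha> * \<alpha> * A i i + cnj \<alpha> * \<beta> * A i j + cnj \<beta> * \<alpha> * A j i + cnj \<beta> * \<beta> * A j j"
proof -
  have e: "cnj (\<alpha> * ev i x + \<beta> * ev j x) = cnj \<alpha> * ev i x + cnj \<beta> * ev j x" for x
    by (simp add: ev_def)
  have "form A (\<lambda>x. \<alpha> * ev i x + \<beta> * ev j x) =
     (\<Sum>x\<in>UNIV. (\<Sum>y\<in>UNIV. A x y * (\<alpha> * ev i y + \<beta> * ev j y)) * (cnj \<alpha> * ev i x + cnj \<beta> * ev j x))"
    unfolding form_def e by (simp add: sum_distrib_left sum_distrib_right algebra_simps)
  also have "\<dots> = (\<Sum>x\<in>UNIV. (\<alpha> * A x i + \<beta> * A x j) * (cnj \<alpha> * ev i x + cnj \<beta> * ev j x))"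
    by (simp add: sum_lin2)
  also have "\<dots> = cnj \<alpha> * (\<alpha> * A i i + \<beta> * A i j) + cnj \<beta> * (\<alpha> * A j i + \<beta> * A j j)"
    by (subst sum_lin2) simp
  finally show ?thesis by (simp add: algebra_simps)
qed

lemma form_ev: "form A (ev i) = A i i"
  using form2[of A 1 i 0 i] by (simp add: ev_def[abs_def])

lemma nonneg_complex: "0 \<le> (z::complex) \<longleftrightarrow> 0 \<le> Re z \<and> Im z = 0"
  by (simp add: less_eq_complex_def)

lemma psd_herm:
  assumes "psd A" shows "A j i = cnj (A i j)"
proof -
  have f: "0 \<le> form A v" for v using assms by (simp add: psd_form)
  have ii: "Im (A i i) = 0" "Im (A j j) = 0" using f[of "ev i"] f[of "ev j"] by (simp_all add: form_ev nonneg_complex)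
  have "Im (form A (\<lambda>x. 1 * ev i x + 1 * ev j x)) = 0" using f nonneg_complex by blast
  then have 1: "Im (A i j) + Im (A j i) = 0" using ii unfolding form2 by simp
  have "Im (form A (\<lambda>x. 1 * ev i x + \<i> * ev j x)) = 0" using f nonneg_complex by blast
  then have 2: "Re (A i j) - Re (A j i) = 0" using ii unfolding form2 by simp
  show ?thesis using 1 2 by (simp add: complex_eq_iff)
qed

lemma psd_diag_real: "psd A \<Longrightarrow> A i i = of_real (Re (A i i)) \<and> 0 \<le> Re (A i i)"
  using psd_herm[of A i i] by (simp add: complex_eq_iff) (metis form_ev nonneg_complex psd_form)

lemma psd_zero_row:
  assumes "psd A" "A k k = 0" shows "A k j = 0"
proof (rule ccontr)
  assume nz: "A k j \<noteq> 0"
  let ?c = "cmod (A j k)"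
  have cpos: "?c > 0" using nz psd_herm[OF assms(1), of j k] by simp
  define r where "r = (Re (A j j) + 1) / (2 * ?c^2)"
  define x where "x = - of_real r * cnj (A j k)"
  have "0 \<le> form A (\<lambda>y. x * ev k y + 1 * ev j y)" using assms(1) by (simp add: psd_form)
  then have "0 \<le> Re (cnj x * A k j + x * A j k + A j j)"
    using assms(2) unfolding form2 by (simp add: nonneg_complex)
  also have "cnj x * A k j + x * A j k = - 2 * of_real r * of_real (?c^2)"
    using psd_herm[OF assms(1), of j k] unfolding x_def
    by (simp add: complex_norm_square[symmetric] algebra_simps)
  finally have "0 \<le> - 2 * r * ?c^2 + Re (A j j)" by simp
  moreover have "2 * r * ?c^2 = Re (A j j) + 1" using cpos unfolding r_def by simp
  ultimately show False by simp
qed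

lemma herm_form_real:
  assumes "\<And>i j. A j i = cnj (A i j)" shows "Im (form A v) = 0"
proof -
  have "cnj (form A v) = (\<Sum>i\<in>UNIV. \<Sum>j\<in>UNIV. v i * A j i * cnj (v j))"
    unfolding form_def by (simp add: assms[symmetric])
  also have "\<dots> = form A v" unfolding form_def
    by (subst sum.swap) (simp add: algebra_simps)
  finally show ?thesis by (metis Reals_cnj_iff complex_is_Real_iff)
qed



lemma mult_if0_r: "(x::complex) * (if c then y else 0) = (if c then x * y else 0)" by simp
lemma mult_if0_l: "(if c then y else 0) * (x::complex) = (if c then y * x else 0)" by simp

lemma cnj_if0: "cnj (if c then y else 0) = (if c then cnj y else 0)" by simp

lemma sum_if_out: "(\<Sum>j\<in>S. if c then f j else (0::complex)) = (if c then \<Sum>j\<in>S. f j else 0)" by simp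

lemma form_add_ev:
  "form A (\<lambda>x. v x + t * ev k x) = form A v + t * (\<Sum>i\<in>UNIV. cnj (v i) * A i k)
     + cnj t * (\<Sum>j\<in>UNIV. A k j * v j) + cnj t * t * A k k"
  unfolding form_def ev_def
  by (simp add: distrib_left distrib_right sum.distrib mult_if0_r mult_if0_l cnj_if0 sum_if_out sum.delta
       sum_distrib_left algebra_simps cong: if_cong)

lemma schur_psd:
  assumes A: "psd A" and nz: "A k k \<noteq> 0"
  shows "psd (\<lambda>i j. A i j - A i k * A k j / A k k)"
  unfolding psd_form
proof
  fix v
  define a where "a = A k k"
  have ar: "cnj a = a" using psd_herm[OF A, of k k] unfolding a_def by simp
  have anz: "a \<noteq> 0" using nz a_def by simp
  define s where "s = (\<Sum>j\<in>UNIV. A k j * v j)"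
  have cs: "(\<Sum>i\<in>UNIV. cnj (v i) * A i k) = cnj s"
    unfolding s_def by (simp add: psd_herm[OF A, symmetric] mult.commute)
  define t where "t = - s / a"
  have pr: "(\<Sum>i\<in>UNIV. cnj (v i) * A i k) * s = (\<Sum>i\<in>UNIV. \<Sum>j\<in>UNIV. cnj (v i) * A i k * (A k j * v j))"
    unfolding s_def by (simp add: sum_product)
  have "form (\<lambda>i j. A i j - A i k * A k j / A k k) v =
     (\<Sum>i\<in>UNIV. \<Sum>j\<in>UNIV. cnj (v i) * A i j * v j - cnj (v i) * A i k * (A k j * v j) / a)"
    unfolding form_def a_def using nz by (intro sum.cong refl) (simp add: field_simps)
  also have "\<dots> = form A v - (\<Sum>i\<in>UNIV. cnj (v i) * A i k) * s / a"
    unfolding pr form_def by (simp add: sum_subtractf sum_divide_distrib)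
  finally have "form (\<lambda>i j. A i j - A i k * A k j / A k k) v = form A v - (\<Sum>i\<in>UNIV. cnj (v i) * A i k) * s / a" .
  also have "\<dots> = form A v - cnj s * s / a" using cs by simp
  also have "\<dots> = form A (\<lambda>x. v x + t * ev k x)"
    unfolding form_add_ev cs s_def[symmetric] a_def[symmetric] t_def using ar anz
    by (simp add: field_simps)
  finally show "0 \<le> form (\<lambda>i j. A i j - A i k * A k j / A k k) v"
    using A by (simp add: psd_form)
qed

lemma decomp_aux:
  "finite S \<Longrightarrow> psd A \<Longrightarrow> (\<forall>i j. i \<notin> S \<or> j \<notin> S \<longrightarrow> A i j = 0) \<Longrightarrow>
    \<exists>U. \<forall>i j. A i j = (\<Sum>k\<in>S. U k i * cnj (U k j))"
proof (induction S arbitrary: A rule: finite_induct)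
  case empty
  then show ?case by auto
next
  case (insert k S)
  show ?case
  proof (cases "A k k = 0")
    case True
    have row: "A k j = 0" for j using psd_zero_row[OF insert.prems(1) True] .
    have col: "A j k = 0" for j using row[of j] psd_herm[OF insert.prems(1), of k j] by simp
    have "\<forall>i j. i \<notin> S \<or> j \<notin> S \<longrightarrow> A i j = 0"
    proof (intro allI impI)
      fix i j assume h: "i \<notin> S \<or> j \<notin> S"
      show "A i j = 0"
      proof (cases "i = k \<or> j = k")
        case True then show ?thesis using row col by auto
      next
        case False then show ?thesis using h insert.prems(2) by auto
      qed
    qed
    then obtain U where U: "\<forall>i j. A i j = (\<Sum>k\<in>S. U k i * cnj (U k j))"
      using insert.IH insert.prems(1) by blast
    define U' where "U' = U(k := (\<lambda>_. 0))"
    have "(\<Sum>m\<in>insert k S. U' m i * cnj (U' m j)) = (\<Sum>m\<in>S. U m i * cnj (U m j))" for i j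
      using insert.hyps unfolding U'_def by (simp add: sum.insert) (rule sum.cong, auto)
    then show ?thesis using U by metis
  next
    case False
    define A' where "A' = (\<lambda>i j. A i j - A i k * A k j / A k k)"
    have pA': "psd A'" unfolding A'_def by (rule schur_psd[OF insert.prems(1) False])
    have dr: "A k k = of_real (Re (A k k))" "0 \<le> Re (A k k)" using psd_diag_real[OF insert.prems(1)] by auto
    have cpos: "0 < Re (A k k)" using dr False by (metis less_eq_real_def of_real_0)
    have "\<forall>i j. i \<notin> S \<or> j \<notin> S \<longrightarrow> A' i j = 0"
    proof (intro allI impI)
      fix i j assume "i \<notin> S \<or> j \<notin> S"
      then consider "i = k" | "j = k" | "i \<notin> insert k S" | "j \<notin> insert k S" by auto
      then show "A' i j = 0"
      proof cases
        case 1 then show ?thesis unfolding A'_def using False by simp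
      next
        case 2 then show ?thesis unfolding A'_def using False by simp
      next
        case 3 then show ?thesis unfolding A'_def using insert.prems(2) by auto
      next
        case 4 then show ?thesis unfolding A'_def using insert.prems(2) by auto
      qed
    qed
    then obtain U where U: "\<forall>i j. A' i j = (\<Sum>k\<in>S. U k i * cnj (U k j))"
      using insert.IH pA' by blast
    define u where "u = (\<lambda>i. A i k / of_real (sqrt (Re (A k k))))"
    define U' where "U' = U(k := u)"
    have uu: "u i * cnj (u j) = A i k * A k j / A k k" for i j
    proof -
      have "u i * cnj (u j) = A i k * cnj (A j k) / (of_real (sqrt (Re (A k k))) * of_real (sqrt (Re (A k k))))"
        unfolding u_def by simp
      also have "(of_real (sqrt (Re (A k k))) * of_real (sqrt (Re (A k k))) :: complex) = A k k"
      proof -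
        have "(of_real (sqrt (Re (A k k))) * of_real (sqrt (Re (A k k))) :: complex) = of_real (sqrt (Re (A k k)) * sqrt (Re (A k k)))"
          by (simp only: of_real_mult)
        also have "\<dots> = of_real (Re (A k k))" using cpos by simp
        finally show ?thesis using dr(1) by simp
      qed
      also have "cnj (A j k) = A k j" using psd_herm[OF insert.prems(1), of j k] by simp
      finally show ?thesis .
    qed
    have "(\<Sum>m\<in>insert k S. U' m i * cnj (U' m j)) = A i k * A k j / A k k + (\<Sum>m\<in>S. U m i * cnj (U m j))" for i j
    proof -
      have "(\<Sum>m\<in>S. U' m i * cnj (U' m j)) = (\<Sum>m\<in>S. U m i * cnj (U m j))"
        using insert.hyps unfolding U'_def by (intro sum.cong) auto
      then show ?thesis using insert.hyps uu unfolding U'_def by (simp add: sum.insert)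
    qed
    then have "A i j = (\<Sum>m\<in>insert k S. U' m i * cnj (U' m j))" for i j
      using U unfolding A'_def by (metis add_diff_cancel_left' diff_add_cancel)
    then show ?thesis by blast
  qed
qed

lemma psd_decomp:
  assumes "psd (A::'a::finite cmat)"
  obtains U :: "'a::finite \<Rightarrow> 'a \<Rightarrow> complex" where "\<And>i j. A i j = (\<Sum>k\<in>UNIV. U k i * cnj (U k j))"
proof -
  have "\<exists>U::'a \<Rightarrow> 'a \<Rightarrow> complex. \<forall>i j. A i j = (\<Sum>k\<in>UNIV. U k i * cnj (U k j))"
    using decomp_aux[of UNIV A] assms by simp
  then obtain U :: "'a \<Rightarrow> 'a \<Rightarrow> complex" where U: "\<forall>i j. A i j = (\<Sum>k\<in>UNIV. U k i * cnj (U k j))" by blast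
  show thesis by (rule that[of U]) (use U in blast)
qed



definition ip :: "('a::finite) cmat \<Rightarrow> 'a cmat \<Rightarrow> real" where
  "ip A B = Re (\<Sum>i\<in>UNIV. \<Sum>j\<in>UNIV. cnj (A i j) * B i j)"

lemma sum3_swap: "(\<Sum>i\<in>A. \<Sum>j\<in>B. \<Sum>k\<in>C. f i j k) = (\<Sum>k\<in>C. \<Sum>i\<in>A. \<Sum>j\<in>B. f i j k)"
proof -
  have "(\<Sum>i\<in>A. \<Sum>j\<in>B. \<Sum>k\<in>C. f i j k) = (\<Sum>i\<in>A. \<Sum>k\<in>C. \<Sum>j\<in>B. f i j k)"
    by (rule sum.cong[OF refl], rule sum.swap)
  also have "\<dots> = (\<Sum>k\<in>C. \<Sum>i\<in>A. \<Sum>j\<in>B. f i j k)" by (rule sum.swap)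
  finally show ?thesis .
qed

lemma cnj_mult_self_nonneg: "0 \<le> cnj z * (z::complex)"
  by (metis complex_norm_square mult.commute of_real_power zero_le_power2 less_eq_complex_def
       Im_complex_of_real Re_complex_of_real zero_complex.sel)

lemma gram_psd:
  fixes U :: "'c::finite \<Rightarrow> 'a::finite \<Rightarrow> complex"
  assumes "\<And>i j. A i j = (\<Sum>k\<in>UNIV. U k i * cnj (U k j))"
  shows "psd A"
  unfolding psd_form
proof
  fix v
  have "form A v = (\<Sum>i\<in>UNIV. \<Sum>j\<in>UNIV. \<Sum>k\<in>UNIV. (cnj (v i) * U k i) * (cnj (U k j) * v j))"
    unfolding form_def assms by (simp add: sum_distrib_left sum_distrib_right algebra_simps)
  also have "\<dots> = (\<Sum>k\<in>UNIV. (\<Sum>i\<in>UNIV. cnj (v i) * U k i) * (\<Sum>j\<in>UNIV. cnj (U k j) * v j))"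
    by (subst sum3_swap) (simp add: sum_product)
  also have "\<dots> = (\<Sum>k\<in>UNIV. cnj (\<Sum>j\<in>UNIV. cnj (U k j) * v j) * (\<Sum>j\<in>UNIV. cnj (U k j) * v j))"
    by (simp add: mult.commute)
  finally have eq: "form A v = (\<Sum>k\<in>UNIV. cnj (\<Sum>j\<in>UNIV. cnj (U k j) * v j) * (\<Sum>j\<in>UNIV. cnj (U k j) * v j))" .
  show "0 \<le> form A v" unfolding eq by (intro sum_nonneg cnj_mult_self_nonneg)
qed

lemma sum_UNIV_prod: "(\<Sum>p\<in>(UNIV::('a::finite \<times> 'b::finite) set). f p) = (\<Sum>i\<in>UNIV. \<Sum>k\<in>UNIV. f (i, k))"
  by (simp add: sum.cartesian_product UNIV_Times_UNIV[symmetric] del: UNIV_Times_UNIV)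

lemma psd_tensor:
  assumes "psd (A::'a::finite cmat)" "psd (B::'b::finite cmat)"
  shows "psd (tensor A B)"
proof -
  obtain U :: "'a \<Rightarrow> 'a \<Rightarrow> complex" where U: "\<And>i j. A i j = (\<Sum>k\<in>UNIV. U k i * cnj (U k j))" using psd_decomp[OF assms(1)] by blast
  obtain W :: "'b \<Rightarrow> 'b \<Rightarrow> complex" where W: "\<And>i j. B i j = (\<Sum>k\<in>UNIV. W k i * cnj (W k j))" using psd_decomp[OF assms(2)] by blast
  define X where "X = (\<lambda>(m::'a, n::'b) (i::'a, k::'b). U m i * W n k)"
  show ?thesis
  proof (rule gram_psd[of _ X])
    fix p q :: "'a \<times> 'b"
    obtain i k where p: "p = (i, k)" by fastforce
    obtain j l where q: "q = (j, l)" by fastforce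
    have "tensor A B p q = A i j * B k l" by (simp add: tensor_def p q)
    also have "\<dots> = (\<Sum>m\<in>UNIV. \<Sum>n\<in>UNIV. (U m i * cnj (U m j)) * (W n k * cnj (W n l)))"
      unfolding U W by (simp add: sum_product)
    also have "\<dots> = (\<Sum>r\<in>UNIV. X r p * cnj (X r q))"
      unfolding sum_UNIV_prod X_def p q by (simp add: algebra_simps)
    finally show "tensor A B p q = (\<Sum>r\<in>UNIV. X r p * cnj (X r q))" .
  qed
qed

lemma ip_psd_nonneg:
  fixes M P :: "('a::finite) cmat"
  assumes "psd M" "psd P"
  shows "0 \<le> ip M P"
proof -
  obtain U :: "'a \<Rightarrow> 'a \<Rightarrow> complex" where U: "\<And>i j. P i j = (\<Sum>k\<in>UNIV. U k i * cnj (U k j))" using psd_decomp[OF assms(2)] by blast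
  have "(\<Sum>i\<in>UNIV. \<Sum>j\<in>UNIV. cnj (M i j) * P i j) =
        (\<Sum>i\<in>UNIV. \<Sum>j\<in>UNIV. \<Sum>k\<in>UNIV. cnj (M i j) * (U k i * cnj (U k j)))"
    unfolding U by (simp add: sum_distrib_left)
  also have "\<dots> = (\<Sum>k\<in>UNIV. cnj (form M (U k)))"
    unfolding form_def by (subst sum3_swap) (simp add: algebra_simps)
  finally have "ip M P = (\<Sum>k\<in>UNIV. Re (form M (U k)))" unfolding ip_def by (simp add: Re_sum)
  also have "\<dots> \<ge> 0" using assms(1) by (intro sum_nonneg) (simp add: psd_form nonneg_complex)
  finally show ?thesis .
qed



definition Dg :: "('a::finite \<Rightarrow> real) \<Rightarrow> 'a cmat" where
  "Dg lam = (\<lambda>i j. if i = j then complex_of_real (lam i) else 0)"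

definition antiherm :: "('a::finite) cmat \<Rightarrow> bool" where
  "antiherm K \<longleftrightarrow> (\<forall>i j. K j i = - cnj (K i j))"

definition vecof :: "('a::finite) cmat \<Rightarrow> complex ^ ('a \<times> 'a)" where
  "vecof H = (\<chi> x. H (fst x) (snd x))"

lemma real_lin_zero: "(\<And>t::real. 0 \<le> c0 + t * c1) \<Longrightarrow> c1 = 0"
proof (rule ccontr)
  assume h: "\<And>t::real. 0 \<le> c0 + t * c1" and nz: "c1 \<noteq> 0"
  have "0 \<le> c0 + (- (\<bar>c0\<bar> + 1) / c1) * c1" by (rule h)
  also have "\<dots> = c0 - (\<bar>c0\<bar> + 1)" using nz by simp
  finally show False by simp
qed

lemma real_lin_pos: "(\<And>t::real. t > 0 \<Longrightarrow> 0 \<le> c0 + t * c1) \<Longrightarrow> 0 \<le> c1"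
proof (rule ccontr)
  assume h: "\<And>t::real. t > 0 \<Longrightarrow> 0 \<le> c0 + t * c1" and nz: "\<not> 0 \<le> c1"
  have "(\<bar>c0\<bar> + 1) / (- c1) > 0" using nz by (intro divide_pos_pos) auto
  then have "0 \<le> c0 + ((\<bar>c0\<bar> + 1) / (- c1)) * c1" by (rule h)
  also have "\<dots> = c0 - (\<bar>c0\<bar> + 1)" using nz by simp
  finally show False by simp
qed

lemma real_lin_const: "(\<And>t::real. t > 0 \<Longrightarrow> 0 \<le> c0 + t * c1) \<Longrightarrow> 0 \<le> c0"
proof (rule ccontr)
  assume h: "\<And>t::real. t > 0 \<Longrightarrow> 0 \<le> c0 + t * c1" and nz: "\<not> 0 \<le> c0"
  define t where "t = - c0 / (2 * (\<bar>c1\<bar> + 1))"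
  have tp: "t > 0" using nz unfolding t_def by (intro divide_pos_pos) auto
  have "t * c1 \<le> t * \<bar>c1\<bar>" using tp by (simp add: mult_left_mono)
  also have "t * \<bar>c1\<bar> \<le> t * (\<bar>c1\<bar> + 1)" using tp by simp
  also have "t * (\<bar>c1\<bar> + 1) = - c0 / 2" unfolding t_def by (simp add: field_simps)
  finally have "c0 + t * c1 < 0" using nz by simp
  with h[OF tp] show False by simp
qed

lemma ip_add: "ip A (\<lambda>i j. X i j + Y i j) = ip A X + ip A Y"
  unfolding ip_def by (simp add: distrib_left sum.distrib)
lemma ip_diff: "ip A (\<lambda>i j. X i j - Y i j) = ip A X - ip A Y"
  unfolding ip_def by (simp add: right_diff_distrib sum_subtractf)
lemma ip_scale: "ip A (\<lambda>i j. complex_of_real c * X i j) = c * ip A X"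
proof -
  have "(\<Sum>i\<in>UNIV. \<Sum>j\<in>UNIV. cnj (A i j) * (complex_of_real c * X i j)) =
     complex_of_real c * (\<Sum>i\<in>UNIV. \<Sum>j\<in>UNIV. cnj (A i j) * X i j)"
    by (simp add: sum_distrib_left algebra_simps)
  then show ?thesis unfolding ip_def by simp
qed
lemma ip_scale_l: "ip (\<lambda>i j. complex_of_real c * A i j) X = c * ip A X"
proof -
  have "(\<Sum>i\<in>UNIV. \<Sum>j\<in>UNIV. cnj (complex_of_real c * A i j) * X i j) =
     complex_of_real c * (\<Sum>i\<in>UNIV. \<Sum>j\<in>UNIV. cnj (A i j) * X i j)"
    by (simp add: sum_distrib_left algebra_simps)
  then show ?thesis unfolding ip_def by simp
qed
lemma ip_zero: "ip A (\<lambda>i j. 0) = 0" unfolding ip_def by simp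
lemma ip_Dg: "ip A (Dg lam) = (\<Sum>i\<in>UNIV. Re (A i i) * lam i)"
  unfolding ip_def Dg_def by (simp add: mult_if0_r sum_if_out Re_sum)

lemma ip_rank1: "ip A (\<lambda>i j. v i * cnj (v j)) = Re (form A v)"
proof -
  have "(\<Sum>i\<in>UNIV. \<Sum>j\<in>UNIV. cnj (A i j) * (v i * cnj (v j))) = cnj (form A v)"
    unfolding form_def by (simp add: algebra_simps)
  then show ?thesis unfolding ip_def by simp
qed

lemma inner_vecof: "inner (a::real, Av) (x, vecof H) = a * x + ip (\<lambda>i j. Av $ (i, j)) H"
  unfolding ip_def vecof_def
  by (simp add: inner_vec_def inner_complex_def sum_UNIV_prod Re_sum)

lemma psd_rank1: "c \<ge> 0 \<Longrightarrow> psd (\<lambda>i j. complex_of_real c * (v i * cnj (v j)))"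
  by (rule gram_psd[of _ "\<lambda>_::unit. \<lambda>i. complex_of_real (sqrt c) * v i"])
     (simp add: algebra_simps flip: of_real_mult)

lemma psd_zero: "psd (\<lambda>i j. 0)" by (simp add: psd_form form_def)

lemma form_lin: "form (\<lambda>i j. complex_of_real u * X i j + complex_of_real v * Y i j) w =
    complex_of_real u * form X w + complex_of_real v * form Y w"
  unfolding form_def by (simp add: algebra_simps sum.distrib sum_distrib_left)

lemma psd_comb: "psd X \<Longrightarrow> psd Y \<Longrightarrow> u \<ge> 0 \<Longrightarrow> v \<ge> 0 \<Longrightarrow>
   psd (\<lambda>i j. complex_of_real u * X i j + complex_of_real v * Y i j)"
  unfolding psd_form form_lin nonneg_complex by simp



lemma Dg_herm: "Dg lam j i = cnj (Dg lam i j)"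
  by (simp add: Dg_def)

lemma Kc_antiherm: "antiherm (\<lambda>x y. complex_of_real t * (c * ev i x * ev j y - cnj c * ev j x * ev i y))"
  unfolding antiherm_def ev_def by (auto simp: algebra_simps)

lemma ip_Kc: "ip A (\<lambda>x y. c * ev i x * ev j y - cnj c * ev j x * ev i y) = Re (cnj (A i j) * c - cnj (A j i) * cnj c)"
  unfolding ip_def ev_def
  by (simp add: right_diff_distrib sum_subtractf mult_if0_r mult_if0_l sum_if_out sum.delta cong: if_cong)

lemma dual:
  fixes \<rho> :: "'a::finite cmat" and p :: real
  assumes rho: "psd \<rho>"
    and primal: "\<And>lam. psd (\<lambda>i j. Dg lam i j - \<rho> i j) \<Longrightarrow> p \<le> sum lam UNIV"
  shows "\<exists>M. psd M \<and> (\<forall>i. M i i = 1) \<and> p \<le> ip M \<rho>"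
proof -
  define G where "G = (\<lambda>(lam::'a\<Rightarrow>real, e::real, Q::'a cmat, K::'a cmat).
      (sum lam UNIV - p + e, vecof (\<lambda>i j. Dg lam i j - \<rho> i j - Q i j + K i j)))"
  define P where "P = {(lam::'a\<Rightarrow>real, e::real, Q::'a cmat, K::'a cmat). 0 < e \<and> psd Q \<and> antiherm K}"
  define C where "C = G ` P"
  have convC: "convex C"
  proof (rule convexI)
    fix x y u v assume x: "x \<in> C" and y: "y \<in> C" and u: "0 \<le> u" and v: "0 \<le> (v::real)" and uv: "u + v = 1"
    from x obtain l1 e1 Q1 K1 where xe: "x = G (l1, e1, Q1, K1)" and p1: "0 < e1" "psd Q1" "antiherm K1"
      unfolding C_def P_def by auto
    from y obtain l2 e2 Q2 K2 where ye: "y = G (l2, e2, Q2, K2)" and p2: "0 < e2" "psd Q2" "antiherm K2"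
      unfolding C_def P_def by auto
    have vv: "v = 1 - u" using uv by simp
    have "u *\<^sub>R x + v *\<^sub>R y = G (\<lambda>i. u * l1 i + v * l2 i, u * e1 + v * e2,
        \<lambda>i j. complex_of_real u * Q1 i j + complex_of_real v * Q2 i j,
        \<lambda>i j. complex_of_real u * K1 i j + complex_of_real v * K2 i j)"
    proof -
      have f: "u * (sum l1 UNIV - p + e1) + v * (sum l2 UNIV - p + e2) =
          sum (\<lambda>i. u * l1 i + v * l2 i) UNIV - p + (u * e1 + v * e2)"
      proof -
        have "sum (\<lambda>i. u * l1 i + v * l2 i) UNIV = u * sum l1 UNIV + v * sum l2 UNIV"
          by (simp add: sum.distrib sum_distrib_left)
        moreover have "u * (sum l1 UNIV - p + e1) + v * (sum l2 UNIV - p + e2) =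
            (u * sum l1 UNIV + v * sum l2 UNIV) - (u + v) * p + (u * e1 + v * e2)"
          by (simp add: algebra_simps)
        ultimately show ?thesis using uv by simp
      qed
      have s: "u *\<^sub>R vecof (\<lambda>i j. Dg l1 i j - \<rho> i j - Q1 i j + K1 i j) + v *\<^sub>R vecof (\<lambda>i j. Dg l2 i j - \<rho> i j - Q2 i j + K2 i j)
         = vecof (\<lambda>i j. Dg (\<lambda>i. u * l1 i + v * l2 i) i j - \<rho> i j - (complex_of_real u * Q1 i j + complex_of_real v * Q2 i j)
              + (complex_of_real u * K1 i j + complex_of_real v * K2 i j))"
      proof (subst vec_eq_iff, rule allI)
        fix z :: "'a \<times> 'a"
        show "(u *\<^sub>R vecof (\<lambda>i j. Dg l1 i j - \<rho> i j - Q1 i j + K1 i j) + v *\<^sub>R vecof (\<lambda>i j. Dg l2 i j - \<rho> i j - Q2 i j + K2 i j)) $ z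
         = vecof (\<lambda>i j. Dg (\<lambda>i. u * l1 i + v * l2 i) i j - \<rho> i j - (complex_of_real u * Q1 i j + complex_of_real v * Q2 i j)
              + (complex_of_real u * K1 i j + complex_of_real v * K2 i j)) $ z"
          unfolding vecof_def vector_add_component vector_scaleR_component vec_lambda_beta
          unfolding scaleR_conv_of_real Dg_def vv by (simp add: algebra_simps)
      qed
      show ?thesis unfolding xe ye G_def using f s by simp
    qed
    moreover have "0 < u * e1 + v * e2"
    proof -
      have "u * min e1 e2 + v * min e1 e2 \<le> u * e1 + v * e2"
        using u v by (intro add_mono mult_left_mono) auto
      moreover have "u * min e1 e2 + v * min e1 e2 = min e1 e2" using uv by (simp add: algebra_simps flip: distrib_right)
      ultimately show ?thesis using p1 p2 by simp
    qed
    moreover have "psd (\<lambda>i j. complex_of_real u * Q1 i j + complex_of_real v * Q2 i j)"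
      using psd_comb[OF p1(2) p2(2) u v] .
    moreover have "antiherm (\<lambda>i j. complex_of_real u * K1 i j + complex_of_real v * K2 i j)"
    proof -
      { fix i j
        have "K1 j i = - cnj (K1 i j)" "K2 j i = - cnj (K2 i j)" using p1(3) p2(3) unfolding antiherm_def by blast+
        then have "complex_of_real u * K1 j i + complex_of_real v * K2 j i = - cnj (complex_of_real u * K1 i j + complex_of_real v * K2 i j)"
          by (simp add: algebra_simps) }
      then show ?thesis unfolding antiherm_def by blast
    qed
    ultimately show "u *\<^sub>R x + v *\<^sub>R y \<in> C" unfolding C_def P_def by (auto intro!: image_eqI)
  qed
  have zC: "0 \<notin> C"
  proof
    assume "0 \<in> C"
    then obtain lam e Q K where z: "G (lam, e, Q, K) = 0" and pr: "0 < e" "psd Q" "antiherm K"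
      unfolding C_def P_def by auto
    have s: "sum lam UNIV - p + e = 0" using z unfolding G_def by (simp add: zero_prod_def)
    have hz: "Dg lam i j - \<rho> i j - Q i j + K i j = 0" for i j
    proof -
      have "vecof (\<lambda>i j. Dg lam i j - \<rho> i j - Q i j + K i j) = 0" using z unfolding G_def by (simp add: zero_prod_def)
      then have "vecof (\<lambda>i j. Dg lam i j - \<rho> i j - Q i j + K i j) $ (i, j) = 0" by simp
      then show ?thesis unfolding vecof_def by simp
    qed
    have K0: "K i j = 0" for i j
    proof -
      have "K j i = - cnj (K i j)" using pr(3) unfolding antiherm_def by blast
      moreover have "K j i = cnj (K i j)"
      proof -
        have "K j i = - (Dg lam j i - \<rho> j i - Q j i)" using hz[of j i] by (simp add: algebra_simps)
        also have "\<dots> = cnj (- (Dg lam i j - \<rho> i j - Q i j))"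
          using Dg_herm[of lam j i] psd_herm[OF rho, of i j] psd_herm[OF pr(2), of i j] by simp
        also have "- (Dg lam i j - \<rho> i j - Q i j) = K i j" using hz[of i j] by (simp add: algebra_simps)
        finally show ?thesis .
      qed
      ultimately have "cnj (K i j) = 0" by simp
      then show ?thesis by simp
    qed
    have "(\<lambda>i j. Dg lam i j - \<rho> i j) = Q"
      using hz K0 by (auto simp: fun_eq_iff algebra_simps)
    then have "p \<le> sum lam UNIV" using primal pr(2) by simp
    then show False using s pr(1) by simp
  qed
  obtain aa where aa: "aa \<noteq> 0" "\<forall>x\<in>C. 0 \<le> inner aa x"
    using separating_hyperplane_set_0[OF convC zC] by blast
  obtain a Av where aaeq: "aa = (a, Av)" by (cases aa)
  define A where "A = (\<lambda>i j. Av $ (i, j))"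
  have key: "0 \<le> a * (sum lam UNIV - p + e) + (\<Sum>i\<in>UNIV. Re (A i i) * lam i) - ip A \<rho> - ip A Q + ip A K"
    if h: "0 < e" "psd Q" "antiherm K" for lam e Q K
  proof -
    have "G (lam, e, Q, K) \<in> C" using h unfolding C_def P_def by force
    then have "0 \<le> inner aa (G (lam, e, Q, K))" using aa by blast
    then have "0 \<le> a * (sum lam UNIV - p + e) + ip A (\<lambda>i j. Dg lam i j - \<rho> i j - Q i j + K i j)"
      unfolding aaeq G_def A_def by (simp only: prod.case inner_vecof)
    then show ?thesis by (simp add: ip_add ip_diff ip_Dg)
  qed
  have z0: "psd (\<lambda>i j. 0::complex)" "antiherm (\<lambda>i j. 0::complex)"
    by (simp_all add: psd_zero antiherm_def)
  have k1: "0 \<le> (- a * p - ip A \<rho>) + t * a" if "t > 0" for t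
    using key[of t "\<lambda>i j. 0" "\<lambda>i j. 0" "\<lambda>_. 0"] z0 that by (simp add: ip_zero algebra_simps)
  have a_nn: "0 \<le> a" using k1 by (rule real_lin_pos)
  have rhoin: "0 \<le> - a * p - ip A \<rho>" using k1 by (rule real_lin_const)
  have diagA: "Re (A i i) = - a" for i
  proof -
    have "0 \<le> (a * (1 - p) - ip A \<rho>) + t * (a + Re (A i i))" for t
    proof -
      have s1: "sum (\<lambda>x. if x = i then t else 0) UNIV = t" by simp
      have s2: "(\<Sum>x\<in>UNIV. Re (A x x) * (if x = i then t else 0)) = Re (A i i) * t"
      proof -
        have "(\<Sum>x\<in>UNIV. Re (A x x) * (if x = i then t else 0)) = (\<Sum>x\<in>UNIV. if x = i then Re (A i i) * t else 0)"
          by (rule sum.cong) auto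
        then show ?thesis by simp
      qed
      show ?thesis
        using key[of 1 "\<lambda>i j. 0" "\<lambda>i j. 0" "\<lambda>x. if x = i then t else 0"] z0
        unfolding s1 s2 by (simp add: ip_zero algebra_simps)
    qed
    then have "a + Re (A i i) = 0" by (rule real_lin_zero)
    then show ?thesis by simp
  qed
  have formA: "Re (form A v) \<le> 0" for v
  proof -
    have "0 \<le> (a * (1 - p) - ip A \<rho>) + t * (- Re (form A v))" if "t > 0" for t
      using key[of 1 "\<lambda>i j. complex_of_real t * (v i * cnj (v j))" "\<lambda>i j. 0" "\<lambda>_. 0"] z0
        psd_rank1[of t v] that
      by (simp add: ip_zero ip_scale ip_rank1 algebra_simps)
    then have "0 \<le> - Re (form A v)" by (rule real_lin_pos)
    then show ?thesis by simp
  qed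
  have ipK: "ip A (\<lambda>x y. c * ev i x * ev j y - cnj c * ev j x * ev i y) = 0" for c i j
  proof -
    define K0 where "K0 = (\<lambda>x y. c * ev i x * ev j y - cnj c * ev j x * ev i y)"
    have "0 \<le> (a * (1 - p) - ip A \<rho>) + t * ip A K0" for t
    proof -
      have "antiherm (\<lambda>x y. complex_of_real t * K0 x y)" unfolding K0_def by (rule Kc_antiherm)
      then have "0 \<le> a * (sum (\<lambda>_. 0) UNIV - p + 1) + (\<Sum>i\<in>UNIV. Re (A i i) * 0) - ip A \<rho> - ip A (\<lambda>i j. 0)
          + ip A (\<lambda>x y. complex_of_real t * K0 x y)"
        using key[of 1 "\<lambda>i j. 0" "\<lambda>x y. complex_of_real t * K0 x y" "\<lambda>_. 0"] z0 by simp
      then show ?thesis unfolding ip_scale ip_zero by (simp add: algebra_simps)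
    qed
    then have "ip A K0 = 0" by (rule real_lin_zero)
    then show ?thesis unfolding K0_def .
  qed
  have hermA: "A j i = cnj (A i j)" for i j
  proof -
    have 1: "Re (A i j) - Re (A j i) = 0" using ipK[of 1 i j] unfolding ip_Kc by simp
    have 2: "Im (A i j) + Im (A j i) = 0" using ipK[of \<i> i j] unfolding ip_Kc by simp
    show ?thesis using 1 2 by (simp add: complex_eq_iff)
  qed
  have Aii: "A i i = complex_of_real (- a)" for i
    using hermA[of i i] diagA[of i] by (simp add: complex_eq_iff)
  have imA: "Im (form A v) = 0" for v by (rule herm_form_real) (rule hermA)
  have apos: "a \<noteq> 0"
  proof
    assume a0: "a = 0"
    have pN: "psd (\<lambda>i j. - A i j)"
      unfolding psd_form
    proof
      fix v
      have "form (\<lambda>i j. - A i j) v = - form A v" unfolding form_def by (simp add: sum_negf)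
      then show "0 \<le> form (\<lambda>i j. - A i j) v" using formA[of v] imA[of v] by (simp add: nonneg_complex)
    qed
    have "- A i j = 0" for i j using psd_zero_row[OF pN, of i j] Aii a0 by simp
    then have "Av = 0" unfolding A_def by (simp add: vec_eq_iff)
    then show False using aa(1) aaeq a0 by (simp add: zero_prod_def)
  qed
  then have ap: "a > 0" using a_nn by simp
  define M where "M = (\<lambda>i j. complex_of_real (- 1 / a) * A i j)"
  have "psd M" unfolding psd_form
  proof
    fix v
    have "form M v = complex_of_real (- 1 / a) * form A v"
      unfolding form_def M_def by (simp add: sum_distrib_left algebra_simps)
    moreover have "0 \<le> (- 1 / a) * Re (form A v)"
      using formA[of v] ap by (intro mult_nonpos_nonpos) auto
    ultimately show "0 \<le> form M v" using imA[of v] by (simp add: nonneg_complex)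
  qed
  moreover have "M i i = 1" for i unfolding M_def Aii using ap by simp
  moreover have "p \<le> ip M \<rho>"
  proof -
    have "ip M \<rho> = (- 1 / a) * ip A \<rho>" unfolding M_def by (rule ip_scale_l)
    also have "\<dots> = (- ip A \<rho>) / a" by simp
    finally have e: "ip M \<rho> = (- ip A \<rho>) / a" .
    have "p * a \<le> - ip A \<rho>" using rhoin by (simp add: algebra_simps)
    then show ?thesis unfolding e using ap by (simp only: pos_le_divide_eq)
  qed
  ultimately show ?thesis by blast
qed



definition Fset :: "('a::finite) cmat \<Rightarrow> real set" where
  "Fset \<rho> = {l. 0 \<le> l \<and> (\<exists>\<sigma>. incoherent \<sigma> \<and> loewner_le \<rho> (\<lambda>i j. complex_of_real (2 powr l) * \<sigma> i j))}"

lemma Fset_bdd: "bdd_below (Fset \<rho>)"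
  unfolding Fset_def by (rule bdd_belowI[of _ 0]) auto

lemma Cmax_Fset:
  fixes \<rho> :: "'a::finite cmat"
  assumes ne: "Fset \<rho> \<noteq> {}"
  shows "Cmax \<rho> = ereal (Inf (Fset \<rho>))"
proof -
  have "Cmax \<rho> = Inf (ereal ` Fset \<rho>)"
  proof (rule antisym)
    show "Cmax \<rho> \<le> Inf (ereal ` Fset \<rho>)"
    proof (rule Inf_greatest)
      fix x assume "x \<in> ereal ` Fset \<rho>"
      then obtain l \<sigma> where x: "x = ereal l" and l: "0 \<le> l" and s: "incoherent \<sigma>"
        and le: "loewner_le \<rho> (\<lambda>i j. complex_of_real (2 powr l) * \<sigma> i j)"
        unfolding Fset_def by auto
      have "Cmax \<rho> \<le> Dmax \<rho> \<sigma>" unfolding Cmax_def using s by (intro INF_lower) simp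
      also have "Dmax \<rho> \<sigma> \<le> ereal l" unfolding Dmax_def using l le by (intro Inf_lower) auto
      finally show "Cmax \<rho> \<le> x" using x by simp
    qed
  next
    show "Inf (ereal ` Fset \<rho>) \<le> Cmax \<rho>"
      unfolding Cmax_def Dmax_def
    proof (rule INF_greatest)
      fix \<sigma> :: "'a cmat" assume "\<sigma> \<in> {\<sigma>. incoherent \<sigma>}"
      then show "Inf (ereal ` Fset \<rho>) \<le> Inf (ereal ` {l. 0 \<le> l \<and> loewner_le \<rho> (\<lambda>i j. complex_of_real (2 powr l) * \<sigma> i j)})"
        unfolding Fset_def by (intro Inf_superset_mono) auto
    qed
  qed
  also have "\<dots> = ereal (Inf (Fset \<rho>))" using ereal_Inf'[OF Fset_bdd ne] by simp
  finally show ?thesis .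
qed

lemma form_Dg: "form (Dg lam) v = (\<Sum>i\<in>UNIV. complex_of_real (lam i) * (cnj (v i) * v i))"
  unfolding form_def Dg_def by (simp add: mult_if0_r mult_if0_l sum_if_out algebra_simps)

lemma psd_Dg: "(\<And>i. 0 \<le> lam i) \<Longrightarrow> psd (Dg lam)"
  unfolding psd_form form_Dg
  by (auto intro!: sum_nonneg mult_nonneg_nonneg cnj_mult_self_nonneg simp: nonneg_complex)

lemma psd_add: "psd X \<Longrightarrow> psd Y \<Longrightarrow> psd (\<lambda>i j. X i j + Y i j)"
  using psd_comb[of X Y 1 1] by simp

lemma mtrace_tensor: "mtrace (tensor A B) = mtrace A * mtrace B"
  unfolding mtrace_def tensor_def by (simp add: sum_UNIV_prod sum_product)

lemma incoherent_tensor: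
  assumes "incoherent s1" "incoherent s2" shows "incoherent (tensor s1 s2)"
  using assms psd_tensor[of s1 s2] mtrace_tensor[of s1 s2]
  unfolding incoherent_def density_def tensor_def by auto

lemma Fset_add:
  assumes "l1 \<in> Fset \<rho>1" "l2 \<in> Fset \<rho>2" "psd \<rho>1" "psd \<rho>2"
  shows "l1 + l2 \<in> Fset (tensor \<rho>1 \<rho>2)"
proof -
  obtain s1 where s1: "incoherent s1" "psd (\<lambda>i j. complex_of_real (2 powr l1) * s1 i j - \<rho>1 i j)" and l1: "0 \<le> l1"
    using assms(1) unfolding Fset_def loewner_le_def by auto
  obtain s2 where s2: "incoherent s2" "psd (\<lambda>i j. complex_of_real (2 powr l2) * s2 i j - \<rho>2 i j)" and l2: "0 \<le> l2"
    using assms(2) unfolding Fset_def loewner_le_def by auto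
  define X2 where "X2 = (\<lambda>i j. complex_of_real (2 powr l2) * s2 i j)"
  have pX2: "psd X2"
    using psd_add[OF s2(2) assms(4)] unfolding X2_def by simp
  have "psd (\<lambda>p q. tensor (\<lambda>i j. complex_of_real (2 powr l1) * s1 i j - \<rho>1 i j) X2 p q + tensor \<rho>1 (\<lambda>i j. X2 i j - \<rho>2 i j) p q)"
    by (intro psd_add psd_tensor s1(2) pX2 assms(3)) (use s2(2) in \<open>simp add: X2_def\<close>)
  also have "(\<lambda>p q. tensor (\<lambda>i j. complex_of_real (2 powr l1) * s1 i j - \<rho>1 i j) X2 p q + tensor \<rho>1 (\<lambda>i j. X2 i j - \<rho>2 i j) p q)
      = (\<lambda>p q. complex_of_real (2 powr (l1 + l2)) * tensor s1 s2 p q - tensor \<rho>1 \<rho>2 p q)"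
    unfolding tensor_def X2_def by (auto simp: fun_eq_iff powr_add algebra_simps)
  finally have "loewner_le (tensor \<rho>1 \<rho>2) (\<lambda>p q. complex_of_real (2 powr (l1 + l2)) * tensor s1 s2 p q)"
    unfolding loewner_le_def .
  then show ?thesis unfolding Fset_def using l1 l2 incoherent_tensor[OF s1(1) s2(1)] by auto
qed



lemma norm_prod_le:
  fixes v :: "'a::finite \<Rightarrow> complex"
  shows "cmod (v i) * cmod (v j) \<le> (\<Sum>k\<in>UNIV. (cmod (v k))^2)"
proof -
  have a: "(cmod (v i))^2 \<le> (\<Sum>k\<in>UNIV. (cmod (v k))^2)" by (rule member_le_sum) auto
  have b: "(cmod (v j))^2 \<le> (\<Sum>k\<in>UNIV. (cmod (v k))^2)" by (rule member_le_sum) auto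
  have "2 * (cmod (v i) * cmod (v j)) \<le> (cmod (v i))^2 + (cmod (v j))^2"
    using sum_squares_bound[of "cmod (v i)" "cmod (v j)"] by (simp add: power2_eq_square)
  then show ?thesis using a b by linarith
qed

lemma form_bound:
  fixes \<rho> :: "'a::finite cmat"
  shows "Re (form \<rho> v) \<le> (\<Sum>i\<in>UNIV. \<Sum>j\<in>UNIV. cmod (\<rho> i j)) * (\<Sum>k\<in>UNIV. (cmod (v k))^2)"
proof -
  have "Re (form \<rho> v) \<le> cmod (form \<rho> v)" by (rule complex_Re_le_cmod)
  also have "\<dots> \<le> (\<Sum>i\<in>UNIV. \<Sum>j\<in>UNIV. cmod (cnj (v i) * \<rho> i j * v j))"
    unfolding form_def by (rule order_trans[OF norm_sum sum_mono[OF norm_sum]])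
  also have "\<dots> \<le> (\<Sum>i\<in>UNIV. \<Sum>j\<in>UNIV. cmod (\<rho> i j) * (\<Sum>k\<in>UNIV. (cmod (v k))^2))"
  proof (intro sum_mono)
    fix i j
    have "cmod (cnj (v i) * \<rho> i j * v j) = cmod (\<rho> i j) * (cmod (v i) * cmod (v j))"
      by (simp add: norm_mult)
    also have "\<dots> \<le> cmod (\<rho> i j) * (\<Sum>k\<in>UNIV. (cmod (v k))^2)"
      by (intro mult_left_mono norm_prod_le) auto
    finally show "cmod (cnj (v i) * \<rho> i j * v j) \<le> cmod (\<rho> i j) * (\<Sum>k\<in>UNIV. (cmod (v k))^2)" .
  qed
  also have "\<dots> = (\<Sum>i\<in>UNIV. \<Sum>j\<in>UNIV. cmod (\<rho> i j)) * (\<Sum>k\<in>UNIV. (cmod (v k))^2)"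
    by (simp add: sum_distrib_right)
  finally show ?thesis .
qed

lemma Fset_nonempty:
  fixes \<rho> :: "'a::finite cmat"
  assumes d: "density \<rho>"
  shows "Fset \<rho> \<noteq> {}"
proof -
  have rho: "psd \<rho>" using d unfolding density_def by simp
  define n where "n = real CARD('a)"
  have n1: "1 \<le> n" unfolding n_def by (simp add: Suc_leI)
  define B where "B = (\<Sum>i\<in>UNIV. \<Sum>j\<in>UNIV. cmod (\<rho> i j))"
  have B0: "0 \<le> B" unfolding B_def by (intro sum_nonneg) auto
  define c where "c = B + 1"
  define \<sigma> :: "'a cmat" where "\<sigma> = Dg (\<lambda>_. 1 / n)"
  define l where "l = log 2 (c * n)"
  have cn: "1 \<le> c * n" 
  proof -
    have "1 \<le> c" using B0 unfolding c_def by simp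
    then show ?thesis using mult_mono[of 1 c 1 n] n1 by simp
  qed
  have pl: "2 powr l = c * n" unfolding l_def using cn by simp
  have l0: "0 \<le> l" unfolding l_def using cn by simp
  have inc: "incoherent \<sigma>"
    unfolding incoherent_def density_def \<sigma>_def
  proof (intro conjI allI impI)
    show "psd (Dg (\<lambda>_::'a. 1 / n))" by (rule psd_Dg) (use n1 in simp)
    show "mtrace (Dg (\<lambda>_::'a. 1 / n)) = 1" unfolding mtrace_def Dg_def using n1 by (simp add: n_def)
  qed (simp add: Dg_def)
  have "psd (\<lambda>i j. complex_of_real (2 powr l) * \<sigma> i j - \<rho> i j)"
    unfolding psd_form
  proof
    fix v
    have e: "(\<lambda>i j. complex_of_real (2 powr l) * \<sigma> i j - \<rho> i j) = (\<lambda>i j. Dg (\<lambda>_. c) i j - \<rho> i j)"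
      unfolding pl \<sigma>_def Dg_def using n1 by (auto simp: fun_eq_iff)
    have "form (\<lambda>i j. Dg (\<lambda>_. c) i j - \<rho> i j) v = form (Dg (\<lambda>_. c)) v - form \<rho> v"
      unfolding form_def by (simp add: algebra_simps sum_subtractf)
    moreover have "Re (form (Dg (\<lambda>_. c)) v) = c * (\<Sum>k\<in>UNIV. (cmod (v k))^2)"
      unfolding form_Dg by (simp add: Re_sum sum_distrib_left complex_norm_square[symmetric] mult.commute)
    moreover have "Im (form (Dg (\<lambda>_. c)) v) = 0"
      by (rule herm_form_real) (simp add: Dg_def)
    moreover have "Im (form \<rho> v) = 0" by (rule herm_form_real) (rule psd_herm[OF rho])
    moreover have "Re (form \<rho> v) \<le> c * (\<Sum>k\<in>UNIV. (cmod (v k))^2)"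
    proof -
      have "Re (form \<rho> v) \<le> B * (\<Sum>k\<in>UNIV. (cmod (v k))^2)" unfolding B_def by (rule form_bound)
      also have "\<dots> \<le> c * (\<Sum>k\<in>UNIV. (cmod (v k))^2)" unfolding c_def
        by (intro mult_right_mono sum_nonneg) auto
      finally show ?thesis .
    qed
    ultimately show "0 \<le> form (\<lambda>i j. complex_of_real (2 powr l) * \<sigma> i j - \<rho> i j) v"
      unfolding e by (simp add: nonneg_complex)
  qed
  then have "l \<in> Fset \<rho>" unfolding Fset_def loewner_le_def using l0 inc by auto
  then show ?thesis by auto
qed

lemma primal:
  fixes \<rho> :: "'a::finite cmat"
  assumes d: "density \<rho>" and h: "psd (\<lambda>i j. Dg lam i j - \<rho> i j)"
  shows "2 powr (Inf (Fset \<rho>)) \<le> sum lam UNIV"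
proof -
  have rho: "psd \<rho>" using d unfolding density_def by simp
  have lam_ge: "Re (\<rho> i i) \<le> lam i" for i
  proof -
    have "0 \<le> form (\<lambda>i j. Dg lam i j - \<rho> i j) (ev i)" using h unfolding psd_form by blast
    then show ?thesis unfolding form_ev by (simp add: Dg_def nonneg_complex)
  qed
  have lam0: "0 \<le> lam i" for i using lam_ge[of i] psd_diag_real[OF rho, of i] by linarith
  have tr: "(\<Sum>i\<in>UNIV. Re (\<rho> i i)) = 1" using d unfolding density_def mtrace_def
    by (metis Re_sum one_complex.sel)
  define s where "s = sum lam UNIV"
  have "(\<Sum>i\<in>UNIV. Re (\<rho> i i)) \<le> sum lam UNIV" by (rule sum_mono) (rule lam_ge)
  then have s1: "1 \<le> s" unfolding s_def using tr by simp
  define l where "l = log 2 s"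
  have pl: "2 powr l = s" unfolding l_def using s1 by simp
  have l0: "0 \<le> l" unfolding l_def using s1 by simp
  define \<sigma> where "\<sigma> = Dg (\<lambda>i. lam i / s)"
  have inc: "incoherent \<sigma>"
    unfolding incoherent_def density_def \<sigma>_def
  proof (intro conjI allI impI)
    show "psd (Dg (\<lambda>i. lam i / s))" by (rule psd_Dg) (use lam0 s1 in simp)
    have "(\<Sum>i\<in>UNIV. lam i / s) = 1" using s1 unfolding s_def by (simp add: sum_divide_distrib[symmetric])
    moreover have "mtrace (Dg (\<lambda>i. lam i / s)) = complex_of_real (\<Sum>i\<in>UNIV. lam i / s)"
      unfolding mtrace_def Dg_def by simp
    ultimately show "mtrace (Dg (\<lambda>i. lam i / s)) = 1" by simp
  qed (simp add: Dg_def)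
  have eqp: "complex_of_real (2 powr l) * \<sigma> i j = Dg lam i j" for i j
    unfolding pl \<sigma>_def Dg_def using s1 by auto
  have "psd (\<lambda>i j. complex_of_real (2 powr l) * \<sigma> i j - \<rho> i j)" unfolding eqp by (rule h)
  then have "l \<in> Fset \<rho>" unfolding Fset_def loewner_le_def using l0 inc by auto
  then have "Inf (Fset \<rho>) \<le> l" by (intro cInf_lower Fset_bdd)
  then have "2 powr (Inf (Fset \<rho>)) \<le> 2 powr l" by simp
  then show ?thesis using pl s_def by simp
qed



lemma herm_ip_real:
  fixes A B :: "'a::finite cmat"
  assumes hA: "\<And>i j. A j i = cnj (A i j)" and hB: "\<And>i j. B j i = cnj (B i j)"
  shows "Im (\<Sum>i\<in>UNIV. \<Sum>j\<in>UNIV. cnj (A i j) * B i j) = 0"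
proof -
  have e: "cnj (cnj (A i j) * B i j) = cnj (A j i) * B j i" for i j
    by (simp add: hA[of j i] hB[of i j])
  have "cnj (\<Sum>i\<in>UNIV. \<Sum>j\<in>UNIV. cnj (A i j) * B i j) = (\<Sum>i\<in>UNIV. \<Sum>j\<in>UNIV. cnj (A j i) * B j i)"
    by (simp only: cnj_sum e)
  also have "\<dots> = (\<Sum>i\<in>UNIV. \<Sum>j\<in>UNIV. cnj (A i j) * B i j)" by (rule sum.swap)
  finally show ?thesis by (metis Reals_cnj_iff complex_is_Real_iff)
qed

lemma ip_tensor:
  fixes A1 B1 :: "'a::finite cmat" and A2 B2 :: "'b::finite cmat"
  assumes i1: "Im (\<Sum>i\<in>UNIV. \<Sum>j\<in>UNIV. cnj (A1 i j) * B1 i j) = 0"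
    and i2: "Im (\<Sum>i\<in>UNIV. \<Sum>j\<in>UNIV. cnj (A2 i j) * B2 i j) = 0"
  shows "ip (tensor A1 A2) (tensor B1 B2) = ip A1 B1 * ip A2 B2"
proof -
  define S1 where "S1 = (\<Sum>i\<in>UNIV. \<Sum>j\<in>UNIV. cnj (A1 i j) * B1 i j)"
  define S2 where "S2 = (\<Sum>i\<in>UNIV. \<Sum>j\<in>UNIV. cnj (A2 i j) * B2 i j)"
  have "(\<Sum>p\<in>UNIV. \<Sum>q\<in>UNIV. cnj (tensor A1 A2 p q) * tensor B1 B2 p q) =
      (\<Sum>i\<in>UNIV. \<Sum>k\<in>UNIV. \<Sum>j\<in>UNIV. \<Sum>l\<in>UNIV. (cnj (A1 i j) * B1 i j) * (cnj (A2 k l) * B2 k l))"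
    unfolding tensor_def by (simp add: sum_UNIV_prod algebra_simps)
  also have "\<dots> = (\<Sum>i\<in>UNIV. \<Sum>j\<in>UNIV. \<Sum>k\<in>UNIV. \<Sum>l\<in>UNIV. (cnj (A1 i j) * B1 i j) * (cnj (A2 k l) * B2 k l))"
    by (rule sum.cong[OF refl], rule sum.swap)
  also have "\<dots> = (\<Sum>i\<in>UNIV. \<Sum>j\<in>UNIV. (cnj (A1 i j) * B1 i j) * S2)"
    unfolding S2_def by (simp add: sum_distrib_left)
  also have "\<dots> = S1 * S2" unfolding S1_def by (simp add: sum_distrib_right)
  finally have "ip (tensor A1 A2) (tensor B1 B2) = Re (S1 * S2)" unfolding ip_def by simp
  also have "\<dots> = Re S1 * Re S2" using i1 i2 unfolding S1_def S2_def by simp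
  finally show ?thesis unfolding ip_def S1_def S2_def .
qed

theorem corollary3:
  fixes \<rho>1 :: "('a::finite) cmat" and \<rho>2 :: "('b::finite) cmat"
  assumes "density \<rho>1" and "density \<rho>2"
  shows "Cmax (tensor \<rho>1 \<rho>2) = Cmax \<rho>1 + Cmax \<rho>2"
proof -
  note d1 = assms(1) and d2 = assms(2)
  have r1: "psd \<rho>1" and r2: "psd \<rho>2" using d1 d2 unfolding density_def by auto
  have ne1: "Fset \<rho>1 \<noteq> {}" and ne2: "Fset \<rho>2 \<noteq> {}" using Fset_nonempty d1 d2 by auto
  define I1 where "I1 = Inf (Fset \<rho>1)"
  define I2 where "I2 = Inf (Fset \<rho>2)"
  define I where "I = Inf (Fset (tensor \<rho>1 \<rho>2))"
  obtain M1 where M1: "psd M1" "\<And>i. M1 i i = 1" "2 powr I1 \<le> ip M1 \<rho>1"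
    using dual[OF r1, of "2 powr I1"] primal[OF d1] unfolding I1_def by blast
  obtain M2 where M2: "psd M2" "\<And>i. M2 i i = 1" "2 powr I2 \<le> ip M2 \<rho>2"
    using dual[OF r2, of "2 powr I2"] primal[OF d2] unfolding I2_def by blast
  obtain l1 where l1: "l1 \<in> Fset \<rho>1" using ne1 by auto
  obtain l2 where l2: "l2 \<in> Fset \<rho>2" using ne2 by auto
  have ne: "Fset (tensor \<rho>1 \<rho>2) \<noteq> {}" using Fset_add[OF l1 l2 r1 r2] by auto
  have up: "I \<le> I1 + I2"
  proof -
    have a: "I \<le> x + y" if "x \<in> Fset \<rho>1" "y \<in> Fset \<rho>2" for x y
      unfolding I_def by (rule cInf_lower[OF Fset_add[OF that r1 r2] Fset_bdd])
    have b: "I - y \<le> I1" if "y \<in> Fset \<rho>2" for y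
      unfolding I1_def using a[OF _ that] by (intro cInf_greatest[OF ne1]) (simp add: algebra_simps)
    have "I - I1 \<le> I2" unfolding I2_def using b by (intro cInf_greatest[OF ne2]) (simp add: algebra_simps)
    then show ?thesis by simp
  qed
  have low: "I1 + I2 \<le> I"
    unfolding I_def
  proof (rule cInf_greatest[OF ne])
    fix l assume "l \<in> Fset (tensor \<rho>1 \<rho>2)"
    then obtain \<sigma> where s: "incoherent \<sigma>"
      and ps: "psd (\<lambda>p q. complex_of_real (2 powr l) * \<sigma> p q - tensor \<rho>1 \<rho>2 p q)"
      unfolding Fset_def loewner_le_def by auto
    define M where "M = tensor M1 M2"
    have pM: "psd M" unfolding M_def by (rule psd_tensor[OF M1(1) M2(1)])
    have Mpp: "M p p = 1" for p unfolding M_def tensor_def using M1(2) M2(2) by (cases p) simp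
    have ps0: "psd \<sigma>" using s unfolding incoherent_def density_def by simp
    have sD: "\<sigma> = Dg (\<lambda>p. Re (\<sigma> p p))"
      using s psd_diag_real[OF ps0] unfolding incoherent_def Dg_def by (auto simp: fun_eq_iff)
    have tr: "(\<Sum>p\<in>UNIV. Re (\<sigma> p p)) = 1"
      using s unfolding incoherent_def density_def mtrace_def by (metis Re_sum one_complex.sel)
    have ipMs: "ip M \<sigma> = 1" by (subst sD) (simp add: ip_Dg Mpp tr)
    have "0 \<le> ip M (\<lambda>p q. complex_of_real (2 powr l) * \<sigma> p q - tensor \<rho>1 \<rho>2 p q)"
      by (rule ip_psd_nonneg[OF pM ps])
    also have "\<dots> = 2 powr l - ip M (tensor \<rho>1 \<rho>2)"
      by (simp add: ip_diff ip_scale ipMs)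
    finally have "ip M (tensor \<rho>1 \<rho>2) \<le> 2 powr l" by simp
    moreover have "ip M (tensor \<rho>1 \<rho>2) = ip M1 \<rho>1 * ip M2 \<rho>2"
      unfolding M_def
      by (rule ip_tensor; rule herm_ip_real; rule psd_herm) (auto simp: M1 M2 r1 r2)
    moreover have "2 powr I1 * 2 powr I2 \<le> ip M1 \<rho>1 * ip M2 \<rho>2"
      by (rule mult_mono[OF M1(3) M2(3)]) (use M1(3) in \<open>auto intro: order_trans[OF _ M1(3)]\<close>)
    ultimately have "2 powr (I1 + I2) \<le> 2 powr l" by (simp add: powr_add)
    then show "I1 + I2 \<le> l" by simp
  qed
  have "I = I1 + I2" using up low by simp
  then show ?thesis
    using Cmax_Fset[OF ne] Cmax_Fset[OF ne1] Cmax_Fset[OF ne2] unfolding I_def I1_def I2_def by simp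
qed


end
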